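(* Let $\mathtt{W}_1',\mathtt{W}_2'\in\mathcal{U}^\ast$ be words, $j_1,j_2\in\mathbb{Z}_{>0}$, and $n_1,n_2\in\mathbb{Z}_{\geq0}$, and put $\mathtt{W}_1=\mathtt{W}_1'u_{j_1}u_0^{n_1}$, $\mathtt{W}_2=\mathtt{W}_2'u_{j_2}u_0^{n_2}$. Then \begin{align*} \mathtt{W}_1\ast\mathtt{W}_2 =& \sum_{\substack{0\le k\le j\le n_2\\ 0\le\varepsilon\le\min\{1,n_2-j\}}}\binom{n_1+k}{n_1}\binom{n_1}{j-k}\left(\mathtt{W}_1'\ast\mathtt{W}_2'u_{j_2}u_0^{n_2-j-\varepsilon}\right)u_{j_1}u_0^{n_1+k}\\ &+\sum_{\substack{0\le k\le j\le n_1\\ 0\le\varepsilon\le\min\{1,n_1-j\}}}\binom{n_2+k}{n_2}\binom{n_2}{j-k}\left(\mathtt{W}_1'u_{j_1}u_0^{n_1-j-\varepsilon}\ast\mathtt{W}_2'\right)u_{j_2}u_0^{n_2+k}\\ &+\sum_{k=0}^{n_2}\binom{n_1+k}{n_1}\binom{n_1}{n_2-k}(\mathtt{W}_1'\ast\mathtt{W}_2')u_{j_1+j_2}u_0^{n_1+k}. \end{align*}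
   Context: Let $\mathcal{U}=\{u_j\mid j\in\mathbb{Z}_{\geq0}\}$ be an alphabet; $\mathcal{U}^\ast$ is the set of words (finite concatenations of letters, including the empty word $\mathbf{1}$), and $\mathbb{Q}\langle\mathcal{U}\rangle$ is the $\mathbb{Q}$-vector space with basis $\mathcal{U}^\ast$, with concatenation extended bilinearly; $u_0^n$ denotes the word consisting of $n$ copies of $u_0$. The stuffle product $\ast$ on $\mathbb{Q}\langle\mathcal{U}\rangle$ is the $\mathbb{Q}$-bilinear product with $\mathbf{1}\ast\mathtt{W}=\mathtt{W}\ast\mathbf{1}=\mathtt{W}$ and, for $j_1,j_2\in\mathbb{Z}_{\ge0}$ and words $\mathtt{W}_1,\mathtt{W}_2$, $u_{j_1}\mathtt{W}_1\ast u_{j_2}\mathtt{W}_2 = u_{j_1}(\mathtt{W}_1\ast u_{j_2}\mathtt{W}_2)+u_{j_2}(u_{j_1}\mathtt{W}_1\ast\mathtt{W}_2)+u_{j_1+j_2}(\mathtt{W}_1\ast\mathtt{W}_2)$. Binomial coefficients $\binom{a}{b}$ with $b<0$ or $b>a$ are $0$. *)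

theory Defs
  imports Complex_Main
begin

text \<open>Words over the alphabet u_0, u_1, ... are lists of natural numbers (the letter u_j is j).
  An element of Q<U> is represented by its coefficient function on words (nat list => rat).\<close>

type_synonym word = "nat list"
type_synonym qpoly = "word \<Rightarrow> rat"

definition lcons :: "nat \<Rightarrow> qpoly \<Rightarrow> qpoly" where
  "lcons a P = (\<lambda>u. case u of [] \<Rightarrow> 0 | c # u' \<Rightarrow> (if c = a then P u' else 0))"

definition rconc :: "qpoly \<Rightarrow> word \<Rightarrow> qpoly" where
  "rconc P w = (\<lambda>u. if length w \<le> length u \<and> drop (length u - length w) u = w
                     then P (take (length u - length w) u) else 0)"

fun stuffle :: "word \<Rightarrow> word \<Rightarrow> qpoly" where
  "stuffle [] w = (\<lambda>u. if u = w then 1 else 0)"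
| "stuffle (a # v) [] = (\<lambda>u. if u = a # v then 1 else 0)"
| "stuffle (a # v) (b # w) =
     (\<lambda>u. lcons a (stuffle v (b # w)) u + lcons b (stuffle (a # v) w) u
          + lcons (a + b) (stuffle v w) u)"

end

theory Submission
  imports Defs
begin

lemma rconc_iff: "rconc P z u = (if \<exists>y. u = y @ z then P (take (length u - length z) u) else 0)"
proof -
  have "(length z \<le> length u \<and> drop (length u - length z) u = z) \<longleftrightarrow> (\<exists>y. u = y @ z)"
  proof
    assume h: "length z \<le> length u \<and> drop (length u - length z) u = z"
    then show "\<exists>y. u = y @ z" by (metis append_take_drop_id)
  next
    assume "\<exists>y. u = y @ z" then show "length z \<le> length u \<and> drop (length u - length z) u = z" by auto
  qed
  then show ?thesis unfolding rconc_def by simp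
qed

lemma rconc_app[simp]: "rconc P z (y @ z) = P y"
  by (simp add: rconc_iff)

lemma rconc_snoc: "rconc P [a] (y @ [b]) = (if b = a then P y else 0)"
  by (auto simp: rconc_iff)

lemma rconc_Nil: "rconc P [a] [] = 0"
  by (simp add: rconc_iff)

lemma stuffle_Nil2[simp]: "stuffle v [] = (\<lambda>u. if u = v then 1 else 0)"
  by (cases v) auto

lemma lcons_delta[simp]: "lcons c (\<lambda>u. if u = w then 1 else 0) = (\<lambda>u. if u = c # w then 1 else 0)"
  by (rule ext) (auto simp: lcons_def split: list.split)

lemma rconc_delta[simp]: "rconc (\<lambda>u. if u = w then 1 else 0) z = (\<lambda>u. if u = w @ z then 1 else 0)"
  by (rule ext) (auto simp: rconc_iff)

lemma lcons_add3[simp]: "lcons c (\<lambda>u. P u + Q u + R u) = (\<lambda>u. lcons c P u + lcons c Q u + lcons c R u)"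
  by (rule ext) (auto simp: lcons_def split: list.split)

lemma rconc_add3[simp]: "rconc (\<lambda>u. P u + Q u + R u) z = (\<lambda>u. rconc P z u + rconc Q z u + rconc R z u)"
  by (rule ext) (auto simp: rconc_def)

lemma lcons_rconc[simp]: "lcons c (rconc P [a]) = rconc (lcons c P) [a]"
proof (rule ext)
  fix u
  show "lcons c (rconc P [a]) u = rconc (lcons c P) [a] u"
  proof (cases u)
    case Nil then show ?thesis by (simp add: lcons_def rconc_Nil)
  next
    case (Cons d u')
    show ?thesis
    proof (cases u' rule: rev_cases)
      case Nil then show ?thesis using Cons by (simp add: lcons_def rconc_iff)
    next
      case (snoc y e)
      then show ?thesis using Cons
        using rconc_snoc[of "lcons c P" a "d # y" e] by (simp add: lcons_def rconc_snoc)
    qed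
  qed
qed

lemma stuffle_right:
  "stuffle (v @ [a]) (w @ [b]) =
   (\<lambda>u. rconc (stuffle v (w @ [b])) [a] u + rconc (stuffle (v @ [a]) w) [b] u
        + rconc (stuffle v w) [a + b] u)"
proof (induction "length v + length w" arbitrary: v w rule: less_induct)
  case less
  show ?case
  proof (cases v)
    case Nil
    show ?thesis
    proof (cases w)
      case Nil
      show ?thesis using \<open>v = []\<close> Nil by (rule_tac ext) (auto)
    next
      case (Cons b' w')
      have h2: "stuffle [a] (w' @ [b]) = (\<lambda>u. rconc (stuffle [] (w' @ [b])) [a] u + rconc (stuffle [a] w') [b] u
        + rconc (stuffle [] w') [a + b] u)" using less[of "[]" w'] Nil Cons by simp
      show ?thesis using Nil Cons h2 apply (rule_tac ext) apply simp done
    qed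
  next
    case (Cons a' v')
    note vc = this
    show ?thesis
    proof (cases w)
      case Nil
      have h1: "stuffle (v' @ [a]) [b] = (\<lambda>u. rconc (stuffle v' [b]) [a] u + rconc (stuffle (v' @ [a]) []) [b] u
        + rconc (stuffle v' []) [a + b] u)" using less[of v' "[]"] Nil Cons by simp
      show ?thesis using Nil vc h1 apply (rule_tac ext) apply simp done
    next
      case (Cons b' w')
      note Cons2 = this
      have h1: "stuffle (v' @ [a]) (b' # w' @ [b]) = (\<lambda>u. rconc (stuffle v' (b' # w' @ [b])) [a] u + rconc (stuffle (v' @ [a]) (b' # w')) [b] u
        + rconc (stuffle v' (b' # w')) [a + b] u)" using less[of v' "b' # w'"] vc Cons2 by simp
      have h2: "stuffle (a' # v' @ [a]) (w' @ [b]) = (\<lambda>u. rconc (stuffle (a' # v') (w' @ [b])) [a] u + rconc (stuffle (a' # v' @ [a]) w') [b] u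
        + rconc (stuffle (a' # v') w') [a + b] u)" using less[of "a' # v'" w'] vc Cons2 by simp
      have h3: "stuffle (v' @ [a]) (w' @ [b]) = (\<lambda>u. rconc (stuffle v' (w' @ [b])) [a] u + rconc (stuffle (v' @ [a]) w') [b] u
        + rconc (stuffle v' w') [a + b] u)" using less[of v' w'] vc Cons2 by simp
      show ?thesis using vc Cons2 h1 h2 h3 apply (rule_tac ext) apply simp done
    qed
  qed
qed


definition alpha :: "nat \<Rightarrow> nat \<Rightarrow> nat \<Rightarrow> nat \<Rightarrow> nat" where
  "alpha n1 n2 t q = (if q + t \<le> n1 + n2 then (t choose n1) * (Suc n1 choose (n1 + n2 - q - t)) else 0)"

definition gam :: "nat \<Rightarrow> nat \<Rightarrow> nat \<Rightarrow> nat" where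
  "gam n1 n2 t = (if t \<le> n1 + n2 then (t choose n1) * (n1 choose (n1 + n2 - t)) else 0)"

lemma alpha_SS: "alpha (Suc a) (Suc b) (Suc t) q = alpha a (Suc b) t q + alpha (Suc a) b t q + alpha a b t q"
proof (cases "q + t \<le> a + b + 1")
  case False
  then show ?thesis by (simp add: alpha_def)
next
  case True
  then obtain r where r: "a + b + 1 = q + t + r" by (metis le_add_diff_inverse)
  have e1: "Suc a + Suc b - q - Suc t = r" "a + Suc b - q - t = r" "Suc a + b - q - t = r"
    using r by arith+
  show ?thesis
  proof (cases r)
    case 0
    then have "\<not> q + t \<le> a + b" using r by arith
    then show ?thesis using r e1 0 by (simp add: alpha_def)
  next
    case (Suc r')
    have e2: "a + b - q - t = r'" using r Suc by arith
    have le: "q + t \<le> a + b" using r Suc by arith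
    show ?thesis using e1 e2 le Suc by (simp add: alpha_def algebra_simps)
  qed
qed

lemma gam_SS: "gam (Suc a) (Suc b) (Suc t) = gam a (Suc b) t + gam (Suc a) b t + gam a b t"
proof (cases "t \<le> a + b + 1")
  case False
  then show ?thesis by (simp add: gam_def)
next
  case True
  then obtain r where r: "a + b + 1 = t + r" by (metis le_add_diff_inverse)
  have e1: "Suc a + Suc b - Suc t = r" "a + Suc b - t = r" "Suc a + b - t = r"
    using r by arith+
  show ?thesis
  proof (cases r)
    case 0
    then have "\<not> t \<le> a + b" using r by arith
    then show ?thesis using r e1 0 by (simp add: gam_def)
  next
    case (Suc r')
    have e2: "a + b - t = r'" using r Suc by arith
    have le: "t \<le> a + b" using r Suc by arith
    show ?thesis using e1 e2 le Suc by (simp add: gam_def algebra_simps)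
  qed
qed


lemma ofnat_if1[simp]: "rat_of_nat (if P then Suc 0 else 0) * x = (if P then x else 0)" by simp

lemma alpha_SS0: "alpha (Suc a) (Suc b) 0 q = 0" by (simp add: alpha_def)
lemma gam_SS0: "gam (Suc a) (Suc b) 0 = 0" by (simp add: gam_def)
lemma alpha_0S: "alpha 0 (Suc b) (Suc t) q = alpha 0 b t q" by (simp add: alpha_def)
lemma gam_0S: "gam 0 (Suc b) (Suc t) = gam 0 b t" by (simp add: gam_def)
lemma alpha_S0: "alpha (Suc b) 0 (Suc t) q = alpha b 0 t q"
proof (cases "t < b")
  case True then show ?thesis by (simp add: alpha_def binomial_eq_0)
next
  case False
  then show ?thesis by (cases "t = b") (auto simp: alpha_def binomial_eq_0)
qed
lemma gam_S0: "gam (Suc b) 0 (Suc t) = gam b 0 t"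
proof (cases "t < b")
  case True then show ?thesis by (simp add: gam_def binomial_eq_0)
next
  case False
  then show ?thesis by (cases "t = b") (auto simp: gam_def binomial_eq_0)
qed
lemma alpha_0S0: "alpha 0 (Suc b) 0 q = (if q = Suc b then 1 else 0) + (if q = b then 1 else 0)"
proof -
  consider "q = Suc b" | "q = b" | "q < b" | "q > Suc b" by linarith
  then show ?thesis
  proof cases
    case 3
    then obtain r where "Suc b - q = Suc (Suc r)" by (metis Suc_diff_Suc Suc_lessI diff_Suc_Suc zero_less_diff Suc_pred less_imp_Suc_add add_diff_cancel_left' add_Suc_right)
    then show ?thesis using 3 by (simp add: alpha_def)
  qed (auto simp: alpha_def)
qed
lemma alpha_S00: "alpha (Suc b) 0 0 q = 0" by (simp add: alpha_def)
lemma gam_0S0: "gam 0 (Suc b) 0 = 0" by (simp add: gam_def)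
lemma gam_S00: "gam (Suc b) 0 0 = 0" by (simp add: gam_def)
lemma alpha_00: "alpha 0 0 t q = (if t = 0 \<and> q = 0 then 1 else 0)" by (simp add: alpha_def)
lemma gam_00: "gam 0 0 t = (if t = 0 then 1 else 0)" by (simp add: gam_def)

definition Phi :: "nat \<Rightarrow> nat \<Rightarrow> nat \<Rightarrow> (nat \<Rightarrow> rat) \<Rightarrow> (nat \<Rightarrow> rat) \<Rightarrow> rat \<Rightarrow> nat \<Rightarrow> nat \<Rightarrow> nat \<Rightarrow> nat \<Rightarrow> rat" where
  "Phi c j1 j2 X Y Z N n1 n2 t =
     (if c = j1 then \<Sum>q\<le>N. of_nat (alpha n1 n2 t q) * X q else 0)
   + (if c = j2 then \<Sum>q\<le>N. of_nat (alpha n2 n1 t q) * Y q else 0)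
   + (if c = j1 + j2 then of_nat (gam n1 n2 t) * Z else 0)"

lemma Phi_SS: "Phi c j1 j2 X Y Z N (Suc a) (Suc b) (Suc t) =
   Phi c j1 j2 X Y Z N a (Suc b) t + Phi c j1 j2 X Y Z N (Suc a) b t + Phi c j1 j2 X Y Z N a b t"
  unfolding Phi_def alpha_SS alpha_SS[of b a] gam_SS
  by (simp add: sum.distrib algebra_simps)

lemma Phi_SS0: "Phi c j1 j2 X Y Z N (Suc a) (Suc b) 0 = 0"
  unfolding Phi_def by (simp add: alpha_SS0 gam_SS0)

lemma Phi_0S: "Phi c j1 j2 X Y Z N 0 (Suc b) (Suc t) = Phi c j1 j2 X Y Z N 0 b t"
  unfolding Phi_def by (simp add: alpha_0S alpha_S0 gam_0S)

lemma Phi_S0: "Phi c j1 j2 X Y Z N (Suc a) 0 (Suc t) = Phi c j1 j2 X Y Z N a 0 t"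
  unfolding Phi_def by (simp add: alpha_0S alpha_S0 gam_S0)

lemma Phi_0S0: "Suc b \<le> N \<Longrightarrow> Phi c j1 j2 X Y Z N 0 (Suc b) 0 = (if c = j1 then X (Suc b) + X b else 0)"
  unfolding Phi_def by (simp add: alpha_0S0 alpha_S00 gam_0S0 sum.distrib distrib_right if_distrib[of "\<lambda>x. x * _"] if_distrib[of of_nat] cong: if_cong)

lemma Phi_S00: "Suc a \<le> N \<Longrightarrow> Phi c j1 j2 X Y Z N (Suc a) 0 0 = (if c = j2 then Y (Suc a) + Y a else 0)"
  unfolding Phi_def by (simp add: alpha_0S0 alpha_S00 gam_S00 sum.distrib distrib_right if_distrib[of "\<lambda>x. x * _"] if_distrib[of of_nat] cong: if_cong)

lemma Phi_00: "Phi c j1 j2 X Y Z N 0 0 t = (if t = 0 then (if c = j1 then X 0 else 0) + (if c = j2 then Y 0 else 0) + (if c = j1 + j2 then Z else 0) else 0)"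
  unfolding Phi_def by (simp add: alpha_00 gam_00 if_distrib[of "\<lambda>x. x * _"] if_distrib[of of_nat] cong: if_cong)


lemma rep_snoc: "W @ j # replicate (Suc a) 0 = (W @ j # replicate a 0) @ [0]"
  by (simp add: replicate_append_same)

lemma rec_SS: "stuffle (W1 @ j1 # replicate (Suc a) 0) (W2 @ j2 # replicate (Suc b) 0) =
  (\<lambda>u. rconc (stuffle (W1 @ j1 # replicate a 0) (W2 @ j2 # replicate (Suc b) 0)) [0] u
     + rconc (stuffle (W1 @ j1 # replicate (Suc a) 0) (W2 @ j2 # replicate b 0)) [0] u
     + rconc (stuffle (W1 @ j1 # replicate a 0) (W2 @ j2 # replicate b 0)) [0] u)"
  using stuffle_right[of "W1 @ j1 # replicate a 0" 0 "W2 @ j2 # replicate b 0" 0]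
  by (simp only: rep_snoc add_0)

lemma rec_0S: "stuffle (W1 @ [j1]) (W2 @ j2 # replicate (Suc b) 0) =
  (\<lambda>u. rconc (stuffle W1 (W2 @ j2 # replicate (Suc b) 0)) [j1] u
     + rconc (stuffle (W1 @ [j1]) (W2 @ j2 # replicate b 0)) [0] u
     + rconc (stuffle W1 (W2 @ j2 # replicate b 0)) [j1] u)"
  using stuffle_right[of W1 j1 "W2 @ j2 # replicate b 0" 0]
  by (simp only: rep_snoc add_0_right)

lemma rec_S0: "stuffle (W1 @ j1 # replicate (Suc a) 0) (W2 @ [j2]) =
  (\<lambda>u. rconc (stuffle (W1 @ j1 # replicate a 0) (W2 @ [j2])) [0] u
     + rconc (stuffle (W1 @ j1 # replicate (Suc a) 0) W2) [j2] u
     + rconc (stuffle (W1 @ j1 # replicate a 0) W2) [j2] u)"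
  using stuffle_right[of "W1 @ j1 # replicate a 0" 0 W2 j2]
  by (simp only: rep_snoc add_0)

lemma rec_00: "stuffle (W1 @ j1 # replicate 0 0) (W2 @ j2 # replicate 0 0) =
      (\<lambda>u. rconc (stuffle W1 (W2 @ j2 # replicate 0 0)) [j1] u + rconc (stuffle (W1 @ j1 # replicate 0 0) W2) [j2] u
        + rconc (stuffle W1 W2) [j1 + j2] u)"
  using stuffle_right[of W1 j1 W2 j2] by simp

lemma rec_0S': "stuffle (W1 @ j1 # replicate 0 0) (W2 @ j2 # replicate (Suc b) 0) =
  (\<lambda>u. rconc (stuffle W1 (W2 @ j2 # replicate (Suc b) 0)) [j1] u
     + rconc (stuffle (W1 @ j1 # replicate 0 0) (W2 @ j2 # replicate b 0)) [0] u
     + rconc (stuffle W1 (W2 @ j2 # replicate b 0)) [j1] u)"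
  using rec_0S[of W1 j1 W2 j2 b] by simp

lemma rec_S0': "stuffle (W1 @ j1 # replicate (Suc a) 0) (W2 @ j2 # replicate 0 0) =
  (\<lambda>u. rconc (stuffle (W1 @ j1 # replicate a 0) (W2 @ j2 # replicate 0 0)) [0] u
     + rconc (stuffle (W1 @ j1 # replicate (Suc a) 0) W2) [j2] u
     + rconc (stuffle (W1 @ j1 # replicate a 0) W2) [j2] u)"
  using rec_S0[of W1 j1 a W2 j2] by simp

lemma scalar:
  fixes W1' W2' u' :: "nat list"
  assumes j1: "j1 > 0" and j2: "j2 > 0" and c: "c > 0"
  shows "n1 \<le> N \<Longrightarrow> n2 \<le> N \<Longrightarrow>
    stuffle (W1' @ j1 # replicate n1 0) (W2' @ j2 # replicate n2 0) (u' @ c # replicate t 0) =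
    Phi c j1 j2 (\<lambda>q. stuffle W1' (W2' @ j2 # replicate q 0) u') (\<lambda>q. stuffle (W1' @ j1 # replicate q 0) W2' u')
      (stuffle W1' W2' u') N n1 n2 t"
proof (induction "n1 + n2" arbitrary: n1 n2 t rule: less_induct)
  case less
  define X where "X = (\<lambda>q. stuffle W1' (W2' @ j2 # replicate q 0) u')"
  define Y where "Y = (\<lambda>q. stuffle (W1' @ j1 # replicate q 0) W2' u')"
  define Z where "Z = stuffle W1' W2' u'"
  have IH: "stuffle (W1' @ j1 # replicate n1' 0) (W2' @ j2 # replicate n2' 0) (u' @ c # replicate t' 0) =
      Phi c j1 j2 X Y Z N n1' n2' t'" if "n1' + n2' < n1 + n2" "n1' \<le> N" "n2' \<le> N" for t' n1' n2'
      using less.hyps[of n1' n2' t'] that unfolding X_def Y_def Z_def by simp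
  have pt: "u' @ c # replicate (Suc t') 0 = (u' @ c # replicate t' 0) @ [0]" for t'
    by (simp add: replicate_append_same)
  have p0: "u' @ c # replicate 0 0 = u' @ [c]" by simp
  consider "n1 = 0" "n2 = 0" | b where "n1 = 0" "n2 = Suc b" | a where "n1 = Suc a" "n2 = 0"
    | a b where "n1 = Suc a" "n2 = Suc b" by (cases n1; cases n2) auto
  then have "stuffle (W1' @ j1 # replicate n1 0) (W2' @ j2 # replicate n2 0) (u' @ c # replicate t 0) =
      Phi c j1 j2 X Y Z N n1 n2 t"
  proof cases
    case 1
    show ?thesis
    proof (cases t)
      case 0
      show ?thesis unfolding 1 0 rec_00 p0 rconc_snoc Phi_00 by (simp add: X_def Y_def Z_def)
    next
      case (Suc t')
      show ?thesis unfolding 1 Suc rec_00 pt rconc_snoc Phi_00 using j1 j2 by simp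
    qed
  next
    case 2
    show ?thesis
    proof (cases t)
      case 0
      show ?thesis unfolding 2 0 rec_0S' p0 rconc_snoc Phi_0S0[OF less.prems(2)[unfolded 2]]
        using c by (simp add: X_def)
    next
      case (Suc t')
      have i: "stuffle (W1' @ j1 # replicate 0 0) (W2' @ j2 # replicate b 0) (u' @ c # replicate t' 0) =
        Phi c j1 j2 X Y Z N 0 b t'" using IH[of 0 b t'] 2 less.prems by simp
      show ?thesis unfolding 2 Suc rec_0S' pt rconc_snoc Phi_0S using j1 i by simp
    qed
  next
    case 3
    show ?thesis
    proof (cases t)
      case 0
      show ?thesis unfolding 3 0 rec_S0' p0 rconc_snoc Phi_S00[OF less.prems(1)[unfolded 3]]
        using c by (simp add: Y_def)
    next
      case (Suc t')
      have i: "stuffle (W1' @ j1 # replicate a 0) (W2' @ j2 # replicate 0 0) (u' @ c # replicate t' 0) =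
        Phi c j1 j2 X Y Z N a 0 t'" using IH[of a 0 t'] 3 less.prems by simp
      show ?thesis unfolding 3 Suc rec_S0' pt rconc_snoc Phi_S0 using j2 i by simp
    qed
  next
    case 4
    show ?thesis
    proof (cases t)
      case 0
      show ?thesis unfolding 4 0 rec_SS p0 rconc_snoc Phi_SS0 using c by simp
    next
      case (Suc t')
      have i1: "stuffle (W1' @ j1 # replicate a 0) (W2' @ j2 # replicate (Suc b) 0) (u' @ c # replicate t' 0) =
        Phi c j1 j2 X Y Z N a (Suc b) t'" using IH[of a "Suc b" t'] 4 less.prems by simp
      have i2: "stuffle (W1' @ j1 # replicate (Suc a) 0) (W2' @ j2 # replicate b 0) (u' @ c # replicate t' 0) =
        Phi c j1 j2 X Y Z N (Suc a) b t'" using IH[of "Suc a" b t'] 4 less.prems by simp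
      have i3: "stuffle (W1' @ j1 # replicate a 0) (W2' @ j2 # replicate b 0) (u' @ c # replicate t' 0) =
        Phi c j1 j2 X Y Z N a b t'" using IH[of a b t'] 4 less.prems by simp
      show ?thesis unfolding 4 Suc rec_SS pt rconc_snoc Phi_SS using i1 i2 i3 by simp
    qed
  qed
  then show ?case unfolding X_def Y_def Z_def .
qed


lemma reidx:
  fixes f :: "'a \<Rightarrow> rat" and N :: nat
  assumes "finite I" "\<And>i. i \<in> I \<Longrightarrow> g i \<le> N"
  shows "(\<Sum>i\<in>I. f i * X (g i)) = (\<Sum>q\<le>N. (\<Sum>i\<in>I. if g i = q then f i else 0) * X q)"
proof -
  have "(\<Sum>q\<le>N. (\<Sum>i\<in>I. if g i = q then f i else 0) * X q) = (\<Sum>q\<le>N. \<Sum>i\<in>I. if q = g i then f i * X q else 0)"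
    by (simp add: sum_distrib_right if_distrib[of "\<lambda>x. x * _"] eq_commute cong: if_cong)
  also have "\<dots> = (\<Sum>i\<in>I. \<Sum>q\<le>N. if q = g i then f i * X q else 0)" by (rule sum.swap)
  also have "\<dots> = (\<Sum>i\<in>I. f i * X (g i))"
  proof (intro sum.cong refl)
    fix i assume "i \<in> I"
    then have "g i \<le> N" by (rule assms(2))
    then show "(\<Sum>q\<le>N. if q = g i then f i * X q else 0) = f i * X (g i)" by (simp add: sum.delta)
  qed
  finally show ?thesis by simp
qed

lemma swapX:
  fixes c :: "'a \<Rightarrow> nat \<Rightarrow> rat" and N :: nat
  shows "(\<Sum>i\<in>I. \<Sum>q\<le>N. c i q * X q) = (\<Sum>q\<le>N. (\<Sum>i\<in>I. c i q) * X q)"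
  by (simp add: sum_distrib_right sum.swap[of _ I])

lemma sum_eps: fixes j m q :: nat assumes jm: "j \<le> m" shows "(\<Sum>\<epsilon>=0..min 1 (m-j). if m-j-\<epsilon> = q then (h::rat) else 0) =
   (if m-j = q then h else 0) + (if j < m \<and> m-j-1 = q then h else 0)"
proof (cases "j = m")
  case True then show ?thesis by (cases q) auto
next
  case False
  with jm have "min 1 (m-j) = 1" "j < m" by auto
  then show ?thesis by (simp add: atLeast0_atMost_Suc)
qed

lemma sum_k: fixes n t j :: nat shows "(\<Sum>k=0..j. if n+k=t then f k else (0::rat)) = (if n \<le> t \<and> t-n \<le> j then f (t-n) else 0)"
proof (cases "n \<le> t")
  case True
  have "(\<Sum>k=0..j. if n+k=t then f k else (0::rat)) = (\<Sum>k=0..j. if k = t-n then f k else 0)"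
  proof -
    have eq: "(n+k=t) = (k = t-n)" for k using True by arith
    show ?thesis by (simp add: eq)
  qed
  then show ?thesis using True by (simp add: sum.delta)
next
  case False then show ?thesis by auto
qed

lemma sum_j1: fixes m q :: nat shows "(\<Sum>j=0..m. if m-j = q then f j else (0::rat)) = (if q \<le> m then f (m-q) else 0)"
proof -
  have "(\<Sum>j=0..m. if m-j = q then f j else (0::rat)) = (\<Sum>j=0..m. if j = m-q \<and> q \<le> m then f j else 0)"
  proof -
    have eq: "(m-j=q) = (j = m-q \<and> q \<le> m)" if "j \<le> m" for j using that by arith
    show ?thesis by (intro sum.cong refl) (simp add: eq)
  qed
  then show ?thesis by (cases "q \<le> m") (simp_all add: sum.delta)
qed

lemma sum_j2: fixes m q :: nat shows "(\<Sum>j=0..m. if j < m \<and> m-j-1 = q then f j else (0::rat)) = (if q < m then f (m-q-1) else 0)"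
proof -
  have "(\<Sum>j=0..m. if j < m \<and> m-j-1 = q then f j else (0::rat)) = (\<Sum>j=0..m. if j = m-q-1 \<and> q < m then f j else 0)"
  proof -
    have eq: "(j<m \<and> m-j-1=q) = (j = m-q-1 \<and> q < m)" if "j \<le> m" for j using that by arith
    show ?thesis using eq by (intro sum.cong refl) auto
  qed
  then show ?thesis by (cases "q < m") (simp_all add: sum.delta)
qed

lemma sum_if_out: "(\<Sum>k\<in>A. if P then f k else (0::rat)) = (if P then (\<Sum>k\<in>A. f k) else 0)"
  by simp

lemma coef: fixes m n t q :: nat shows
  "(\<Sum>j=0..m. \<Sum>k=0..j. \<Sum>\<epsilon>=0..min 1 (m-j). if m-j-\<epsilon> = q then
      of_nat ((n+k) choose n) * of_nat (n choose (j-k)) * (if n+k = t then 1 else 0) else (0::rat))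
   = of_nat (alpha n m t q)"
proof -
  define B where "B j = (if n \<le> t \<and> t-n \<le> j then of_nat (t choose n) * of_nat (n choose (j-(t-n))) else (0::rat))" for j
  have kk: "(\<Sum>k=0..j. of_nat ((n+k) choose n) * of_nat (n choose (j-k)) * (if n+k = t then 1 else 0)) = B j" for j
  proof -
    have "(\<Sum>k=0..j. of_nat ((n+k) choose n) * of_nat (n choose (j-k)) * (if n+k = t then 1 else (0::rat)))
       = (\<Sum>k=0..j. if n+k = t then of_nat ((n+k) choose n) * of_nat (n choose (j-k)) else 0)"
      by (intro sum.cong) auto
    also have "\<dots> = B j" unfolding sum_k B_def by auto
    finally show ?thesis .
  qed
  have "(\<Sum>j=0..m. \<Sum>k=0..j. \<Sum>\<epsilon>=0..min 1 (m-j). if m-j-\<epsilon> = q then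
      of_nat ((n+k) choose n) * of_nat (n choose (j-k)) * (if n+k = t then 1 else 0) else (0::rat))
    = (\<Sum>j=0..m. (if m-j = q then B j else 0) + (if j < m \<and> m-j-1 = q then B j else 0))"
  proof (intro sum.cong refl)
    fix j assume "j \<in> {0..m}"
    then have "j \<le> m" by simp
    then have "(\<Sum>k=0..j. \<Sum>\<epsilon>=0..min 1 (m-j). if m-j-\<epsilon> = q then
      of_nat ((n+k) choose n) * of_nat (n choose (j-k)) * (if n+k = t then 1 else 0) else (0::rat))
      = (\<Sum>k=0..j. (if m-j = q then of_nat ((n+k) choose n) * of_nat (n choose (j-k)) * (if n+k = t then 1 else 0) else 0)
          + (if j < m \<and> m-j-1 = q then of_nat ((n+k) choose n) * of_nat (n choose (j-k)) * (if n+k = t then 1 else 0) else 0))"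
      by (simp only: sum_eps[OF \<open>j \<le> m\<close>])
    also have "\<dots> = (if m-j = q then B j else 0) + (if j < m \<and> m-j-1 = q then B j else 0)"
      by (simp only: sum.distrib sum_if_out kk)
    finally show "(\<Sum>k=0..j. \<Sum>\<epsilon>=0..min 1 (m-j). if m-j-\<epsilon> = q then
      of_nat ((n+k) choose n) * of_nat (n choose (j-k)) * (if n+k = t then 1 else 0) else (0::rat))
      = (if m-j = q then B j else 0) + (if j < m \<and> m-j-1 = q then B j else 0)" .
  qed
  also have "\<dots> = (if q \<le> m then B (m-q) else 0) + (if q < m then B (m-q-1) else 0)"
    by (simp only: sum.distrib sum_j1 sum_j2)
  also have "\<dots> = of_nat (alpha n m t q)"
  proof (cases "n \<le> t \<and> q + t \<le> n + m")
    case False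
    then show ?thesis
      by (auto simp: B_def alpha_def binomial_eq_0)
  next
    case True
    define r where "r = m - q - (t - n)"
    have r: "m = q + (t - n) + r" "n \<le> t" "q \<le> m" using True unfolding r_def by arith+
    show ?thesis
    proof (cases r)
      case 0
      have e: "n + m - q - t = 0" "m - q - (t - n) = 0" "\<not> (t - n \<le> m - q - 1 \<and> q < m)" using r 0 by arith+
      show ?thesis unfolding B_def alpha_def using e r True by simp
    next
      case (Suc r')
      have e: "n + m - q - t = Suc r'" "m - q - (t - n) = Suc r'" "m - q - 1 - (t - n) = r'"
        "t - n \<le> m - q - 1" "q < m" "t - n \<le> m - q" using r Suc by arith+
      have "(if q \<le> m then B (m-q) else 0) + (if q < m then B (m-q-1) else 0)
         = of_nat (t choose n) * of_nat (n choose Suc r') + of_nat (t choose n) * of_nat (n choose r')"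
        unfolding B_def using e r by simp
      also have "\<dots> = of_nat (alpha n m t q)"
        unfolding alpha_def using e True by (simp add: algebra_simps)
      finally show ?thesis .
    qed
  qed
  finally show ?thesis .
qed


lemma sum1_eval:
  fixes X :: "nat \<Rightarrow> rat" and N m n t :: nat
  assumes mN: "m \<le> N"
  shows "(\<Sum>j=0..m. \<Sum>k=0..j. \<Sum>\<epsilon>=0..min 1 (m-j).
      of_nat ((n+k) choose n) * of_nat (n choose (j-k)) * (if n+k = t then X (m-j-\<epsilon>) else 0))
    = (\<Sum>q\<le>N. of_nat (alpha n m t q) * X q)"
proof -
  have step: "(\<Sum>\<epsilon>=0..min 1 (m-j). of_nat ((n+k) choose n) * of_nat (n choose (j-k)) * (if n+k = t then X (m-j-\<epsilon>) else 0))
    = (\<Sum>q\<le>N. (\<Sum>\<epsilon>=0..min 1 (m-j). if m-j-\<epsilon> = q then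
          of_nat ((n+k) choose n) * of_nat (n choose (j-k)) * (if n+k = t then 1 else 0) else (0::rat)) * X q)" for j k
  proof -
    have "(\<Sum>\<epsilon>=0..min 1 (m-j). of_nat ((n+k) choose n) * of_nat (n choose (j-k)) * (if n+k = t then X (m-j-\<epsilon>) else 0))
      = (\<Sum>\<epsilon>=0..min 1 (m-j). (of_nat ((n+k) choose n) * of_nat (n choose (j-k)) * (if n+k = t then 1 else 0)) * X (m-j-\<epsilon>))"
      by (intro sum.cong refl) simp
    also have "\<dots> = (\<Sum>q\<le>N. (\<Sum>\<epsilon>=0..min 1 (m-j). if m-j-\<epsilon> = q then
          of_nat ((n+k) choose n) * of_nat (n choose (j-k)) * (if n+k = t then 1 else 0) else (0::rat)) * X q)"
      by (rule reidx) (use mN in auto)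
    finally show ?thesis .
  qed
  have "(\<Sum>j=0..m. \<Sum>k=0..j. \<Sum>\<epsilon>=0..min 1 (m-j).
      of_nat ((n+k) choose n) * of_nat (n choose (j-k)) * (if n+k = t then X (m-j-\<epsilon>) else 0))
    = (\<Sum>j=0..m. \<Sum>k=0..j. \<Sum>q\<le>N. (\<Sum>\<epsilon>=0..min 1 (m-j). if m-j-\<epsilon> = q then
          of_nat ((n+k) choose n) * of_nat (n choose (j-k)) * (if n+k = t then 1 else 0) else (0::rat)) * X q)"
    by (simp only: step)
  also have "\<dots> = (\<Sum>j=0..m. \<Sum>q\<le>N. (\<Sum>k=0..j. \<Sum>\<epsilon>=0..min 1 (m-j). if m-j-\<epsilon> = q then
          of_nat ((n+k) choose n) * of_nat (n choose (j-k)) * (if n+k = t then 1 else 0) else (0::rat)) * X q)"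
    by (simp only: swapX)
  also have "\<dots> = (\<Sum>q\<le>N. (\<Sum>j=0..m. \<Sum>k=0..j. \<Sum>\<epsilon>=0..min 1 (m-j). if m-j-\<epsilon> = q then
          of_nat ((n+k) choose n) * of_nat (n choose (j-k)) * (if n+k = t then 1 else 0) else (0::rat)) * X q)"
    by (simp only: swapX)
  also have "\<dots> = (\<Sum>q\<le>N. of_nat (alpha n m t q) * X q)"
    by (simp only: coef)
  finally show ?thesis .
qed

lemma sum3_eval:
  fixes Z :: rat and m n t :: nat
  shows "(\<Sum>k=0..m. of_nat ((n+k) choose n) * of_nat (n choose (m-k)) * (if n+k = t then Z else 0))
    = of_nat (gam n m t) * Z"
proof -
  have "(\<Sum>k=0..m. of_nat ((n+k) choose n) * of_nat (n choose (m-k)) * (if n+k = t then Z else 0))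
    = (\<Sum>k=0..m. if n+k = t then of_nat ((n+k) choose n) * of_nat (n choose (m-k)) * Z else 0)"
    by (intro sum.cong refl) simp
  also have "\<dots> = (if n \<le> t \<and> t-n \<le> m then of_nat (t choose n) * of_nat (n choose (m-(t-n))) * Z else 0)"
    by (simp only: sum_k) simp
  also have "\<dots> = of_nat (gam n m t) * Z"
  proof (cases "n \<le> t")
    case True
    then have "m - (t - n) = n + m - t" by arith
    then show ?thesis using True by (auto simp: gam_def)
  next
    case False then show ?thesis by (auto simp: gam_def binomial_eq_0)
  qed
  finally show ?thesis .
qed

lemma rep_cancel: "replicate m 0 @ a # xs = replicate t 0 @ c # ys \<Longrightarrow> a \<noteq> 0 \<Longrightarrow> c \<noteq> (0::nat) \<Longrightarrow> m = t \<and> a = c \<and> xs = ys"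
proof (induction m arbitrary: t)
  case 0 then show ?case by (cases t) auto
next
  case (Suc m) then show ?case by (cases t) auto
qed

lemma rconc_ev:
  assumes "a > 0" "c > 0"
  shows "rconc P (a # replicate m 0) (u' @ c # replicate t 0) = (if a = c \<and> m = t then P u' else 0)"
proof (cases "a = c \<and> m = t")
  case True
  then show ?thesis using rconc_app[of P "a # replicate m 0" u'] by simp
next
  case False
  have "\<not> (\<exists>y. u' @ c # replicate t 0 = y @ a # replicate m 0)"
  proof
    assume "\<exists>y. u' @ c # replicate t 0 = y @ a # replicate m 0"
    then obtain y where "u' @ c # replicate t 0 = y @ a # replicate m 0" by blast
    then have "rev (u' @ c # replicate t 0) = rev (y @ a # replicate m 0)" by simp
    then have "replicate t 0 @ c # rev u' = replicate m 0 @ a # rev y" by simp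
    then have "m = t \<and> a = c" using rep_cancel[of m a "rev y" t c "rev u'"] assms by auto
    then show False using False by simp
  qed
  then show ?thesis using False by (auto simp: rconc_iff)
qed

lemma rconc_zero:
  assumes "a > 0"
  shows "rconc P (a # z) (replicate t 0) = 0"
proof -
  have "\<not> (\<exists>y. replicate t 0 = y @ a # z)"
  proof
    assume "\<exists>y. replicate t 0 = y @ a # z"
    then obtain y where "replicate t 0 = y @ a # z" by blast
    then have "a \<in> set (replicate t (0::nat))" by simp
    then show False using assms by simp
  qed
  then show ?thesis by (simp add: rconc_iff)
qed

lemma decomp: "(\<exists>t. u = replicate t (0::nat)) \<or> (\<exists>u' c t. c > 0 \<and> u = u' @ c # replicate t 0)"
proof (induction u rule: rev_induct)
  case Nil then show ?case by (rule disjI1, rule exI[of _ 0]) simp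
next
  case (snoc d x)
  show ?case
  proof (cases "d = 0")
    case False then show ?thesis by (intro disjI2 exI[of _ x] exI[of _ d] exI[of _ 0]) simp
  next
    case True
    from snoc show ?thesis
    proof
      assume "\<exists>t. x = replicate t 0"
      then obtain t where "x = replicate t 0" by blast
      then have "x @ [d] = replicate (Suc t) 0" using True by (simp add: replicate_append_same)
      then show ?thesis by blast
    next
      assume "\<exists>u' c t. c > 0 \<and> x = u' @ c # replicate t 0"
      then obtain u' c t where "c > 0" "x = u' @ c # replicate t 0" by blast
      then have "c > 0 \<and> x @ [d] = u' @ c # replicate (Suc t) 0" using True by (simp add: replicate_append_same)
      then show ?thesis by blast
    qed
  qed
qed

lemma weight: "sum_list u \<noteq> sum_list v + sum_list w \<Longrightarrow> stuffle v w u = 0"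
  by (induction v w arbitrary: u rule: stuffle.induct) (auto simp: lcons_def split: list.split)


theorem lemma2p2:
  fixes W1' W2' :: "nat list" and j1 j2 n1 n2 :: nat
  assumes "j1 > 0" and "j2 > 0"
  shows "stuffle (W1' @ [j1] @ replicate n1 0) (W2' @ [j2] @ replicate n2 0) =
    (\<lambda>u.
      (\<Sum>j = 0..n2. \<Sum>k = 0..j. \<Sum>\<epsilon> = 0..min 1 (n2 - j).
          of_nat ((n1 + k) choose n1) * of_nat (n1 choose (j - k)) *
          rconc (stuffle W1' (W2' @ [j2] @ replicate (n2 - j - \<epsilon>) 0))
                ([j1] @ replicate (n1 + k) 0) u)
    + (\<Sum>j = 0..n1. \<Sum>k = 0..j. \<Sum>\<epsilon> = 0..min 1 (n1 - j).
          of_nat ((n2 + k) choose n2) * of_nat (n2 choose (j - k)) *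
          rconc (stuffle (W1' @ [j1] @ replicate (n1 - j - \<epsilon>) 0) W2')
                ([j2] @ replicate (n2 + k) 0) u)
    + (\<Sum>k = 0..n2.
          of_nat ((n1 + k) choose n1) * of_nat (n1 choose (n2 - k)) *
          rconc (stuffle W1' W2') ([j1 + j2] @ replicate (n1 + k) 0) u))"
proof (rule ext)
  fix u :: "nat list"
  have j1: "j1 > 0" and j2: "j2 > 0" using assms by auto
  have "j1 + j2 > 0" using j1 by simp
  consider (Z) t where "u = replicate t 0" | (NZ) u' c t where "c > 0" "u = u' @ c # replicate t 0"
    using decomp[of u] by blast
  then show "stuffle (W1' @ [j1] @ replicate n1 0) (W2' @ [j2] @ replicate n2 0) u =
      (\<Sum>j = 0..n2. \<Sum>k = 0..j. \<Sum>\<epsilon> = 0..min 1 (n2 - j).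
          of_nat ((n1 + k) choose n1) * of_nat (n1 choose (j - k)) *
          rconc (stuffle W1' (W2' @ [j2] @ replicate (n2 - j - \<epsilon>) 0))
                ([j1] @ replicate (n1 + k) 0) u)
    + (\<Sum>j = 0..n1. \<Sum>k = 0..j. \<Sum>\<epsilon> = 0..min 1 (n1 - j).
          of_nat ((n2 + k) choose n2) * of_nat (n2 choose (j - k)) *
          rconc (stuffle (W1' @ [j1] @ replicate (n1 - j - \<epsilon>) 0) W2')
                ([j2] @ replicate (n2 + k) 0) u)
    + (\<Sum>k = 0..n2.
          of_nat ((n1 + k) choose n1) * of_nat (n1 choose (n2 - k)) *
          rconc (stuffle W1' W2') ([j1 + j2] @ replicate (n1 + k) 0) u)"
  proof cases
    case Z
    have "stuffle (W1' @ [j1] @ replicate n1 0) (W2' @ [j2] @ replicate n2 0) u = 0"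
      by (rule weight) (use j1 Z in \<open>simp add: sum_list_replicate\<close>)
    then show ?thesis using Z j1 j2 \<open>j1 + j2 > 0\<close> by (simp add: rconc_zero)
  next
    case NZ
    define N where "N = n1 + n2"
    define X where "X = (\<lambda>q. stuffle W1' (W2' @ j2 # replicate q 0) u')"
    define Y where "Y = (\<lambda>q. stuffle (W1' @ j1 # replicate q 0) W2' u')"
    define Zz where "Zz = stuffle W1' W2' u'"
    have L: "stuffle (W1' @ [j1] @ replicate n1 0) (W2' @ [j2] @ replicate n2 0) u = Phi c j1 j2 X Y Zz N n1 n2 t"
      using scalar[OF j1 j2 NZ(1), of n1 N n2 W1' W2' u' t] NZ(2) unfolding N_def X_def Y_def Zz_def by simp
    have P1: "(\<Sum>j = 0..n2. \<Sum>k = 0..j. \<Sum>\<epsilon> = 0..min 1 (n2 - j).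
          of_nat ((n1 + k) choose n1) * of_nat (n1 choose (j - k)) *
          rconc (stuffle W1' (W2' @ [j2] @ replicate (n2 - j - \<epsilon>) 0))
                ([j1] @ replicate (n1 + k) 0) u)
      = (if c = j1 then \<Sum>q\<le>N. of_nat (alpha n1 n2 t q) * X q else 0)"
    proof (cases "c = j1")
      case True
      have "(\<Sum>j = 0..n2. \<Sum>k = 0..j. \<Sum>\<epsilon> = 0..min 1 (n2 - j).
          of_nat ((n1 + k) choose n1) * of_nat (n1 choose (j - k)) *
          rconc (stuffle W1' (W2' @ [j2] @ replicate (n2 - j - \<epsilon>) 0))
                ([j1] @ replicate (n1 + k) 0) u)
        = (\<Sum>j = 0..n2. \<Sum>k = 0..j. \<Sum>\<epsilon> = 0..min 1 (n2 - j).
          of_nat ((n1 + k) choose n1) * of_nat (n1 choose (j - k)) * (if n1 + k = t then X (n2 - j - \<epsilon>) else 0))"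
        by (intro sum.cong refl) (simp add: NZ rconc_ev j1 True X_def)
      also have "\<dots> = (\<Sum>q\<le>N. of_nat (alpha n1 n2 t q) * X q)"
        by (rule sum1_eval) (simp add: N_def)
      finally show ?thesis using True by simp
    next
      case False
      then show ?thesis using NZ j1 by (simp add: rconc_ev)
    qed
    have P2: "(\<Sum>j = 0..n1. \<Sum>k = 0..j. \<Sum>\<epsilon> = 0..min 1 (n1 - j).
          of_nat ((n2 + k) choose n2) * of_nat (n2 choose (j - k)) *
          rconc (stuffle (W1' @ [j1] @ replicate (n1 - j - \<epsilon>) 0) W2')
                ([j2] @ replicate (n2 + k) 0) u)
      = (if c = j2 then \<Sum>q\<le>N. of_nat (alpha n2 n1 t q) * Y q else 0)"
    proof (cases "c = j2")
      case True
      have "(\<Sum>j = 0..n1. \<Sum>k = 0..j. \<Sum>\<epsilon> = 0..min 1 (n1 - j).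
          of_nat ((n2 + k) choose n2) * of_nat (n2 choose (j - k)) *
          rconc (stuffle (W1' @ [j1] @ replicate (n1 - j - \<epsilon>) 0) W2')
                ([j2] @ replicate (n2 + k) 0) u)
        = (\<Sum>j = 0..n1. \<Sum>k = 0..j. \<Sum>\<epsilon> = 0..min 1 (n1 - j).
          of_nat ((n2 + k) choose n2) * of_nat (n2 choose (j - k)) * (if n2 + k = t then Y (n1 - j - \<epsilon>) else 0))"
        by (intro sum.cong refl) (simp add: NZ rconc_ev j2 True Y_def)
      also have "\<dots> = (\<Sum>q\<le>N. of_nat (alpha n2 n1 t q) * Y q)"
        by (rule sum1_eval) (simp add: N_def)
      finally show ?thesis using True by simp
    next
      case False
      then show ?thesis using NZ j2 by (simp add: rconc_ev)
    qed
    have P3: "(\<Sum>k = 0..n2.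
          of_nat ((n1 + k) choose n1) * of_nat (n1 choose (n2 - k)) *
          rconc (stuffle W1' W2') ([j1 + j2] @ replicate (n1 + k) 0) u)
      = (if c = j1 + j2 then of_nat (gam n1 n2 t) * Zz else 0)"
    proof (cases "c = j1 + j2")
      case True
      have "(\<Sum>k = 0..n2.
          of_nat ((n1 + k) choose n1) * of_nat (n1 choose (n2 - k)) *
          rconc (stuffle W1' W2') ([j1 + j2] @ replicate (n1 + k) 0) u)
        = (\<Sum>k = 0..n2. of_nat ((n1 + k) choose n1) * of_nat (n1 choose (n2 - k)) * (if n1 + k = t then Zz else 0))"
        using \<open>j1 + j2 > 0\<close> by (intro sum.cong refl) (simp add: NZ rconc_ev True Zz_def)
      also have "\<dots> = of_nat (gam n1 n2 t) * Zz" by (rule sum3_eval)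
      finally show ?thesis using True by simp
    next
      case False
      then show ?thesis using NZ \<open>j1 + j2 > 0\<close> by (simp add: rconc_ev)
    qed
    show ?thesis unfolding L P1 P2 P3 Phi_def ..
  qed
qed

end
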